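(* If $P\in\mathfrak p_{\mathbb C}$ preserves some supersymmetry, i.e. there exists $0\ne\xi\in\mathbb C^{16}$ with $\sum_{I,A}\Gamma^I_{\dot AA}P^A\xi^I=0$ for all $\dot A=1,\dots,128$, then $P$ is a nilpotent element of $(\mathfrak e_8)_{\mathbb C}$. In particular, for every supersymmetric solution of the timelike class, $P_z$ is nilpotent at every point of spacetime.
   Context: $(\mathfrak e_8)_{\mathbb C}=\mathfrak{so}(16)_{\mathbb C}\oplus\mathfrak p_{\mathbb C}$ with $\mathfrak{so}(16)$ generators $X^{IJ}$ and $\mathfrak p_{\mathbb C}$ spanned by $Y^A$, $A=1,\dots,128$, with $[X^{IJ},Y^A]=-\tfrac12\Gamma^{IJ}_{AB}Y^B$, $[Y^A,Y^B]=\tfrac12\Gamma^{IJ}_{AB}X^{IJ}$; $\Gamma^I_{A\dot A}$ are real chiral blocks of $SO(16)$ gamma matrices, $\Gamma^{IJ}_{AB}=\tfrac12(\Gamma^I_{A\dot A}\Gamma^J_{\dot AB}-\Gamma^J_{A\dot A}\Gamma^I_{\dot AB})$, and $P=P^AY^A$. An element is nilpotent if its adjoint action is nilpotent. In the timelike class, $P_z$ is the $z$-component of $P=\tfrac{1-\theta}{2}V^{-1}dV$ and supersymmetry requires $\bar\zeta^I\Gamma^I_{\dot AA}P^A_z=0$ with $\zeta^I=\epsilon^I_1+i\epsilon^I_2$ not identically zero. *)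

theory Defs
  imports Complex_Main
begin

text \<open>Conventions (0-based indices): vector index I < 16, chiral spinor index A < 128,
 conjugate chiral index Ad < 128. The real chiral blocks are given by
 G :: nat => nat => nat => real with  G I A Ad = Gamma^I_{A Ad}, and
 Gamma^I_{Ad A} = Gamma^I_{A Ad} (the full real gamma matrices are symmetric).\<close>

definition gamma_blocks :: "(nat \<Rightarrow> nat \<Rightarrow> nat \<Rightarrow> real) \<Rightarrow> bool" where
  "gamma_blocks G \<longleftrightarrow>
     (\<forall>I<16. \<forall>J<16. \<forall>A<128. \<forall>B<128.
        (\<Sum>Ad<128. G I A Ad * G J B Ad + G J A Ad * G I B Ad)
          = (if I = J \<and> A = B then 2 else 0)) \<and>
     (\<forall>I<16. \<forall>J<16. \<forall>Ad<128. \<forall>Bd<128.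
        (\<Sum>A<128. G I A Ad * G J A Bd + G J A Ad * G I A Bd)
          = (if I = J \<and> Ad = Bd then 2 else 0))"

definition gamma2 :: "(nat \<Rightarrow> nat \<Rightarrow> nat \<Rightarrow> real) \<Rightarrow> nat \<Rightarrow> nat \<Rightarrow> nat \<Rightarrow> nat \<Rightarrow> real" where
  "gamma2 G I J A B = (1/2) * (\<Sum>Ad<128. G I A Ad * G J B Ad - G J A Ad * G I B Ad)"

text \<open>An element of (e8)_C = so(16)_C (+) p_C is represented as a pair (a, v):
 the so(16) part is 1/2 * sum_{I,J} a_{IJ} X^{IJ} with a antisymmetric, and the p part is
 sum_A v_A Y^A.\<close>
type_synonym e8elt = "(nat \<Rightarrow> nat \<Rightarrow> complex) \<times> (nat \<Rightarrow> complex)"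

definition e8_carrier :: "e8elt set" where
  "e8_carrier = {(a, v). (\<forall>I J. a I J = - a J I) \<and>
                          (\<forall>I J. \<not> (I < 16 \<and> J < 16) \<longrightarrow> a I J = 0) \<and>
                          (\<forall>A. A \<ge> 128 \<longrightarrow> v A = 0)}"

definition e8_zero :: e8elt where
  "e8_zero = ((\<lambda>_ _. 0), (\<lambda>_. 0))"

text \<open>Adjoint action ad_P = [P, -] of P = sum_A P^A Y^A, computed from
 [X^{IJ},Y^A] = -1/2 Gamma^{IJ}_{AB} Y^B and [Y^A,Y^B] = 1/2 Gamma^{IJ}_{AB} X^{IJ}:
 [P, X^{IJ}] = 1/2 Gamma^{IJ}_{AB} P^A Y^B,
 [P, v^B Y^B] = 1/2 (P^A v^B Gamma^{IJ}_{AB}) X^{IJ}.\<close>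
definition ad_p :: "(nat \<Rightarrow> nat \<Rightarrow> nat \<Rightarrow> real) \<Rightarrow> (nat \<Rightarrow> complex) \<Rightarrow> e8elt \<Rightarrow> e8elt" where
  "ad_p G P x = (case x of (a, v) \<Rightarrow>
     ((\<lambda>I J. if I < 16 \<and> J < 16
              then (\<Sum>A<128. \<Sum>B<128. P A * v B * complex_of_real (gamma2 G I J A B))
              else 0),
      (\<lambda>B. if B < 128
            then (\<Sum>I<16. \<Sum>J<16. \<Sum>A<128.
                    (1/4) * a I J * complex_of_real (gamma2 G I J A B) * P A)
            else 0)))"

definition nilpotent_p :: "(nat \<Rightarrow> nat \<Rightarrow> nat \<Rightarrow> real) \<Rightarrow> (nat \<Rightarrow> complex) \<Rightarrow> bool" where
  "nilpotent_p G P \<longleftrightarrow> (\<exists>n. \<forall>x \<in> e8_carrier. (ad_p G P ^^ n) x = e8_zero)"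

end

theory Submission
  imports Defs
begin

definition gL :: "(nat \<Rightarrow> nat \<Rightarrow> nat \<Rightarrow> real) \<Rightarrow> nat \<Rightarrow> (nat \<Rightarrow> complex) \<Rightarrow> nat \<Rightarrow> complex" where
  "gL G I v Ad = (\<Sum>A<128. complex_of_real (G I A Ad) * v A)"
definition gR :: "(nat \<Rightarrow> nat \<Rightarrow> nat \<Rightarrow> real) \<Rightarrow> nat \<Rightarrow> (nat \<Rightarrow> complex) \<Rightarrow> nat \<Rightarrow> complex" where
  "gR G I s A = (\<Sum>Ad<128. complex_of_real (G I A Ad) * s Ad)"
definition gLx :: "(nat \<Rightarrow> nat \<Rightarrow> nat \<Rightarrow> real) \<Rightarrow> (nat \<Rightarrow> complex) \<Rightarrow> (nat \<Rightarrow> complex) \<Rightarrow> nat \<Rightarrow> complex" where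
  "gLx G x v Ad = (\<Sum>I<16. x I * gL G I v Ad)"
definition gRx :: "(nat \<Rightarrow> nat \<Rightarrow> nat \<Rightarrow> real) \<Rightarrow> (nat \<Rightarrow> complex) \<Rightarrow> (nat \<Rightarrow> complex) \<Rightarrow> nat \<Rightarrow> complex" where
  "gRx G x s A = (\<Sum>I<16. x I * gR G I s A)"
definition ip :: "(nat \<Rightarrow> complex) \<Rightarrow> (nat \<Rightarrow> complex) \<Rightarrow> complex" where
  "ip s t = (\<Sum>A<128. s A * t A)"
definition dot :: "(nat \<Rightarrow> complex) \<Rightarrow> (nat \<Rightarrow> complex) \<Rightarrow> complex" where
  "dot x y = (\<Sum>I<16. x I * y I)"

lemma gL_cong: "(\<And>A. A < 128 \<Longrightarrow> u A = u' A) \<Longrightarrow> gL G I u Ad = gL G I u' Ad"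
  by (simp add: gL_def)
lemma gR_cong: "(\<And>A. A < 128 \<Longrightarrow> u A = u' A) \<Longrightarrow> gR G I u Ad = gR G I u' Ad"
  by (simp add: gR_def)
lemma gLx_cong: "(\<And>A. A < 128 \<Longrightarrow> u A = u' A) \<Longrightarrow> gLx G x u Ad = gLx G x u' Ad"
  unfolding gLx_def by (metis gL_cong)
lemma gRx_cong: "(\<And>A. A < 128 \<Longrightarrow> u A = u' A) \<Longrightarrow> gRx G x u Ad = gRx G x u' Ad"
  unfolding gRx_def by (metis gR_cong)
lemma ip_cong: "(\<And>A. A < 128 \<Longrightarrow> u A = u' A) \<Longrightarrow> (\<And>A. A < 128 \<Longrightarrow> w A = w' A) \<Longrightarrow> ip u w = ip u' w'"
  by (simp add: ip_def)

lemma gL_add: "gL G I (\<lambda>A. u A + w A) Ad = gL G I u Ad + gL G I w Ad"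
  by (simp add: gL_def distrib_left sum.distrib)
lemma gL_diff: "gL G I (\<lambda>A. u A - w A) Ad = gL G I u Ad - gL G I w Ad"
  by (simp add: gL_def right_diff_distrib sum_subtractf)
lemma gL_scale: "gL G I (\<lambda>A. c * u A) Ad = c * gL G I u Ad"
  by (simp add: gL_def sum_distrib_left mult.left_commute)
lemma gL_sum: "gL G I (\<lambda>A. \<Sum>i\<in>S. h i A) Ad = (\<Sum>i\<in>S. gL G I (h i) Ad)"
  unfolding gL_def sum_distrib_left by (rule sum.swap)
lemma gL_zero: "gL G I (\<lambda>A. 0) Ad = 0"
  by (simp add: gL_def)
lemma gR_add: "gR G I (\<lambda>A. u A + w A) Ad = gR G I u Ad + gR G I w Ad"
  by (simp add: gR_def distrib_left sum.distrib)
lemma gR_diff: "gR G I (\<lambda>A. u A - w A) Ad = gR G I u Ad - gR G I w Ad"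
  by (simp add: gR_def right_diff_distrib sum_subtractf)
lemma gR_scale: "gR G I (\<lambda>A. c * u A) Ad = c * gR G I u Ad"
  by (simp add: gR_def sum_distrib_left mult.left_commute)
lemma gR_sum: "gR G I (\<lambda>A. \<Sum>i\<in>S. h i A) Ad = (\<Sum>i\<in>S. gR G I (h i) Ad)"
  unfolding gR_def sum_distrib_left by (rule sum.swap)
lemma gR_zero: "gR G I (\<lambda>A. 0) Ad = 0"
  by (simp add: gR_def)

lemma gLx_add: "gLx G x (\<lambda>A. u A + w A) Ad = gLx G x u Ad + gLx G x w Ad"
  by (simp add: gLx_def gL_add distrib_left sum.distrib)
lemma gLx_diff: "gLx G x (\<lambda>A. u A - w A) Ad = gLx G x u Ad - gLx G x w Ad"
  by (simp add: gLx_def gL_diff right_diff_distrib sum_subtractf)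
lemma gLx_scale: "gLx G x (\<lambda>A. c * u A) Ad = c * gLx G x u Ad"
  by (simp add: gLx_def gL_scale sum_distrib_left mult.left_commute)
lemma gLx_sum: "gLx G x (\<lambda>A. \<Sum>i\<in>S. h i A) Ad = (\<Sum>i\<in>S. gLx G x (h i) Ad)"
  unfolding gLx_def gL_sum sum_distrib_left by (rule sum.swap)
lemma gRx_add: "gRx G x (\<lambda>A. u A + w A) Ad = gRx G x u Ad + gRx G x w Ad"
  by (simp add: gRx_def gR_add distrib_left sum.distrib)
lemma gRx_diff: "gRx G x (\<lambda>A. u A - w A) Ad = gRx G x u Ad - gRx G x w Ad"
  by (simp add: gRx_def gR_diff right_diff_distrib sum_subtractf)
lemma gRx_scale: "gRx G x (\<lambda>A. c * u A) Ad = c * gRx G x u Ad"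
  by (simp add: gRx_def gR_scale sum_distrib_left mult.left_commute)
lemma gRx_sum: "gRx G x (\<lambda>A. \<Sum>i\<in>S. h i A) Ad = (\<Sum>i\<in>S. gRx G x (h i) Ad)"
  unfolding gRx_def gR_sum sum_distrib_left by (rule sum.swap)

lemma ip_add1: "ip (\<lambda>A. u A + w A) t = ip u t + ip w t"
  by (simp add: ip_def distrib_right sum.distrib)
lemma ip_add2: "ip t (\<lambda>A. u A + w A) = ip t u + ip t w"
  by (simp add: ip_def distrib_left sum.distrib)
lemma ip_diff1: "ip (\<lambda>A. u A - w A) t = ip u t - ip w t"
  by (simp add: ip_def left_diff_distrib sum_subtractf)
lemma ip_diff2: "ip t (\<lambda>A. u A - w A) = ip t u - ip t w"
  by (simp add: ip_def right_diff_distrib sum_subtractf)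
lemma ip_scale1: "ip (\<lambda>A. c * u A) t = c * ip u t"
  by (simp add: ip_def sum_distrib_left mult.assoc)
lemma ip_scale2: "ip t (\<lambda>A. c * u A) = c * ip t u"
  by (simp add: ip_def sum_distrib_left mult.left_commute)
lemma ip_sum1: "ip (\<lambda>A. \<Sum>i\<in>S. h i A) t = (\<Sum>i\<in>S. ip (h i) t)"
  unfolding ip_def sum_distrib_right by (rule sum.swap)
lemma ip_sum2: "ip t (\<lambda>A. \<Sum>i\<in>S. h i A) = (\<Sum>i\<in>S. ip t (h i))"
  unfolding ip_def sum_distrib_left by (rule sum.swap)

lemma adjL: "ip u (gL G I v) = ip (gR G I u) v"
proof -
  have "ip u (gL G I v) = (\<Sum>Ad<128. \<Sum>A<128. u Ad * (complex_of_real (G I A Ad) * v A))"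
    by (simp add: ip_def gL_def sum_distrib_left)
  also have "\<dots> = (\<Sum>A<128. \<Sum>Ad<128. u Ad * (complex_of_real (G I A Ad) * v A))"
    by (rule sum.swap)
  also have "\<dots> = ip (gR G I u) v"
    by (simp add: ip_def gR_def sum_distrib_right sum_distrib_left mult_ac)
  finally show ?thesis .
qed

lemma adjLx: "ip u (gLx G x v) = ip (gRx G x u) v"
proof -
  have "ip u (gLx G x v) = (\<Sum>I<16. x I * ip u (gL G I v))"
    unfolding gLx_def by (simp add: ip_sum2 ip_scale2)
  also have "\<dots> = (\<Sum>I<16. x I * ip (gR G I u) v)" by (simp add: adjL)
  also have "\<dots> = ip (gRx G x u) v"
    unfolding gRx_def by (simp add: ip_sum1 ip_scale1)
  finally show ?thesis .
qed


lemma C1i: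
  assumes gb: "gamma_blocks G" and A: "A < 128" and I: "I < 16" and J: "J < 16"
  shows "gR G I (gL G J v) A + gR G J (gL G I v) A = (if I = J then 2 * v A else 0)"
proof -
  have e: "\<And>B. B < 128 \<Longrightarrow> (\<Sum>Ad<128. G I A Ad * G J B Ad + G J A Ad * G I B Ad) = (if I = J \<and> A = B then 2 else 0)"
    using gb A I J unfolding gamma_blocks_def by blast
  have s1: "\<And>I J. gR G I (gL G J v) A = (\<Sum>B<128. \<Sum>Ad<128. complex_of_real (G I A Ad) * (complex_of_real (G J B Ad) * v B))"
    by (simp add: gR_def gL_def sum_distrib_left) (rule sum.swap)
  have "gR G I (gL G J v) A + gR G J (gL G I v) A
     = (\<Sum>B<128. v B * complex_of_real (\<Sum>Ad<128. G I A Ad * G J B Ad + G J A Ad * G I B Ad))"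
    unfolding s1 by (simp add: sum.distrib[symmetric] sum_distrib_left algebra_simps)
  also have "\<dots> = (\<Sum>B<128. v B * (if I = J \<and> A = B then 2 else 0))"
    by (rule sum.cong) (simp_all add: e)
  also have "\<dots> = (if I = J then 2 * v A else 0)"
    using A by (auto simp: if_distrib[of "\<lambda>x. v _ * x"] sum.delta cong: if_cong)
  finally show ?thesis .
qed

lemma C2i:
  assumes gb: "gamma_blocks G" and Ad: "Ad < 128" and I: "I < 16" and J: "J < 16"
  shows "gL G I (gR G J s) Ad + gL G J (gR G I s) Ad = (if I = J then 2 * s Ad else 0)"
proof -
  have e: "\<And>Bd. Bd < 128 \<Longrightarrow> (\<Sum>A<128. G I A Ad * G J A Bd + G J A Ad * G I A Bd) = (if I = J \<and> Ad = Bd then 2 else 0)"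
    using gb Ad I J unfolding gamma_blocks_def by blast
  have s1: "\<And>I J. gL G I (gR G J s) Ad = (\<Sum>Bd<128. \<Sum>A<128. complex_of_real (G I A Ad) * (complex_of_real (G J A Bd) * s Bd))"
    by (simp add: gR_def gL_def sum_distrib_left sum_distrib_right mult_ac) (rule sum.swap)
  have "gL G I (gR G J s) Ad + gL G J (gR G I s) Ad
     = (\<Sum>Bd<128. s Bd * complex_of_real (\<Sum>A<128. G I A Ad * G J A Bd + G J A Ad * G I A Bd))"
    unfolding s1 by (simp add: sum.distrib[symmetric] sum_distrib_left algebra_simps)
  also have "\<dots> = (\<Sum>Bd<128. s Bd * (if I = J \<and> Ad = Bd then 2 else 0))"
    by (rule sum.cong) (simp_all add: e)
  also have "\<dots> = (if I = J then 2 * s Ad else 0)"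
    using Ad by (auto simp: if_distrib[of "\<lambda>x. s _ * x"] sum.delta cong: if_cong)
  finally show ?thesis .
qed


lemma gLx_fun: "gLx G x v = (\<lambda>Ad. \<Sum>J<16. x J * gL G J v Ad)"
  by (rule ext) (simp add: gLx_def)
lemma gRx_fun: "gRx G x v = (\<lambda>Ad. \<Sum>J<16. x J * gR G J v Ad)"
  by (rule ext) (simp add: gRx_def)

lemma gR_gLx: "gR G I (gLx G x v) A = (\<Sum>J<16. x J * gR G I (gL G J v) A)"
  unfolding gLx_fun gR_sum gR_scale ..
lemma gL_gRx: "gL G I (gRx G x v) A = (\<Sum>J<16. x J * gL G I (gR G J v) A)"
  unfolding gRx_fun gL_sum gL_scale ..
lemma gRx_gLx: "gRx G y (gLx G x v) A = (\<Sum>J<16. x J * gRx G y (gL G J v) A)"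
  unfolding gLx_fun gRx_sum gRx_scale ..
lemma gLx_gRx: "gLx G y (gRx G x v) A = (\<Sum>J<16. x J * gLx G y (gR G J v) A)"
  unfolding gRx_fun gLx_sum gLx_scale ..

lemma C1m:
  assumes gb: "gamma_blocks G" and A: "A < 128" and I: "I < 16"
  shows "gRx G x (gL G I v) A + gR G I (gLx G x v) A = 2 * x I * v A"
proof -
  have "gRx G x (gL G I v) A + gR G I (gLx G x v) A
      = (\<Sum>J<16. x J * (gR G J (gL G I v) A + gR G I (gL G J v) A))"
    unfolding gR_gLx by (simp add: gRx_def sum.distrib[symmetric] distrib_left)
  also have "\<dots> = (\<Sum>J<16. x J * (if J = I then 2 * v A else 0))"
    by (rule sum.cong) (simp_all add: C1i[OF gb A _ I])
  also have "\<dots> = 2 * x I * v A" using I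
    by (simp add: if_distrib[of "\<lambda>y. x _ * y"] cong: if_cong)
  finally show ?thesis .
qed

lemma C2m:
  assumes gb: "gamma_blocks G" and A: "A < 128" and I: "I < 16"
  shows "gLx G x (gR G I v) A + gL G I (gRx G x v) A = 2 * x I * v A"
proof -
  have "gLx G x (gR G I v) A + gL G I (gRx G x v) A
      = (\<Sum>J<16. x J * (gL G J (gR G I v) A + gL G I (gR G J v) A))"
    unfolding gL_gRx by (simp add: gLx_def sum.distrib[symmetric] distrib_left)
  also have "\<dots> = (\<Sum>J<16. x J * (if J = I then 2 * v A else 0))"
    by (rule sum.cong) (simp_all add: C2i[OF gb A _ I])
  also have "\<dots> = 2 * x I * v A" using I
    by (simp add: if_distrib[of "\<lambda>y. x _ * y"] cong: if_cong)
  finally show ?thesis .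
qed

lemma C1xx:
  assumes gb: "gamma_blocks G" and A: "A < 128"
  shows "gRx G x (gLx G y v) A + gRx G y (gLx G x v) A = 2 * dot x y * v A"
proof -
  have "gRx G x (gLx G y v) A + gRx G y (gLx G x v) A
      = (\<Sum>I<16. x I * (gR G I (gLx G y v) A + gRx G y (gL G I v) A))"
    unfolding gRx_gLx[of G y x] by (simp add: gRx_def[of G x] sum.distrib[symmetric] distrib_left)
  also have "\<dots> = (\<Sum>I<16. x I * (2 * y I * v A))"
    using C1m[OF gb A, of _ y v] by (intro sum.cong refl) (simp add: add.commute)
  also have "\<dots> = 2 * dot x y * v A"
    by (simp add: dot_def sum_distrib_left sum_distrib_right mult_ac)
  finally show ?thesis .
qed


lemma ipLL: "ip (gL G I P) (gL G J v) = (\<Sum>A<128. \<Sum>B<128. P A * v B * complex_of_real (\<Sum>Ad<128. G I A Ad * G J B Ad))"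
proof -
  have "ip (gL G I P) (gL G J v) = (\<Sum>Ad<128. \<Sum>A<128. \<Sum>B<128. P A * v B * (complex_of_real (G I A Ad) * complex_of_real (G J B Ad)))"
    by (simp add: ip_def gL_def sum_product mult_ac)
  also have "\<dots> = (\<Sum>A<128. \<Sum>Ad<128. \<Sum>B<128. P A * v B * (complex_of_real (G I A Ad) * complex_of_real (G J B Ad)))"
    by (rule sum.swap)
  also have "\<dots> = (\<Sum>A<128. \<Sum>B<128. \<Sum>Ad<128. P A * v B * (complex_of_real (G I A Ad) * complex_of_real (G J B Ad)))"
    by (rule sum.cong[OF refl], rule sum.swap)
  also have "\<dots> = (\<Sum>A<128. \<Sum>B<128. P A * v B * complex_of_real (\<Sum>Ad<128. G I A Ad * G J B Ad))"
    by (simp add: sum_distrib_left)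
  finally show ?thesis .
qed

lemma Fexp: "(\<Sum>A<128. \<Sum>B<128. P A * v B * complex_of_real (gamma2 G I J A B))
   = (ip (gL G I P) (gL G J v) - ip (gL G J P) (gL G I v)) / 2"
  unfolding ipLL gamma2_def
  by (simp add: sum_subtractf right_diff_distrib sum_divide_distrib[symmetric] algebra_simps diff_divide_distrib)

lemma RL: "gR G J (gL G I P) B = (\<Sum>A<128. P A * complex_of_real (\<Sum>Ad<128. G I A Ad * G J B Ad))"
proof -
  have "gR G J (gL G I P) B = (\<Sum>Ad<128. \<Sum>A<128. P A * (complex_of_real (G I A Ad) * complex_of_real (G J B Ad)))"
    by (simp add: gR_def gL_def sum_distrib_left mult_ac)
  also have "\<dots> = (\<Sum>A<128. \<Sum>Ad<128. P A * (complex_of_real (G I A Ad) * complex_of_real (G J B Ad)))"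
    by (rule sum.swap)
  finally show ?thesis by (simp add: sum_distrib_left)
qed

lemma Gexp: "(\<Sum>A<128. 1/4 * a I J * complex_of_real (gamma2 G I J A B) * P A)
   = a I J * (gR G J (gL G I P) B - gR G I (gL G J P) B) / 8"
  unfolding RL gamma2_def
  by (simp add: sum_subtractf[symmetric] sum_distrib_left sum_divide_distrib[symmetric] algebra_simps diff_divide_distrib)


lemma gRx_zero: "gRx G x (\<lambda>A. 0) Ad = 0"
  by (simp add: gRx_def gR_zero)
lemma gLx_zero: "gLx G x (\<lambda>A. 0) Ad = 0"
  by (simp add: gLx_def gL_zero)
lemma ip_zero1: "ip (\<lambda>A. 0) t = 0" by (simp add: ip_def)
lemma ip_comm: "ip u w = ip w u" by (simp add: ip_def mult.commute)

definition fA :: "(nat \<Rightarrow> nat \<Rightarrow> nat \<Rightarrow> real) \<Rightarrow> (nat \<Rightarrow> complex) \<Rightarrow> (nat \<Rightarrow> complex) \<Rightarrow> nat \<Rightarrow> nat \<Rightarrow> complex" where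
  "fA G P v = (\<lambda>I J. if I < 16 \<and> J < 16
              then (\<Sum>A<128. \<Sum>B<128. P A * v B * complex_of_real (gamma2 G I J A B))
              else 0)"
definition gV :: "(nat \<Rightarrow> nat \<Rightarrow> nat \<Rightarrow> real) \<Rightarrow> (nat \<Rightarrow> complex) \<Rightarrow> (nat \<Rightarrow> nat \<Rightarrow> complex) \<Rightarrow> nat \<Rightarrow> complex" where
  "gV G P a = (\<lambda>B. if B < 128
            then (\<Sum>I<16. \<Sum>J<16. \<Sum>A<128.
                    (1/4) * a I J * complex_of_real (gamma2 G I J A B) * P A)
            else 0)"

lemma ad_p_eq: "ad_p G P (a, v) = (fA G P v, gV G P a)"
  by (simp add: ad_p_def fA_def gV_def)

definition A0 :: "(nat \<Rightarrow> complex) \<Rightarrow> (nat \<Rightarrow> nat \<Rightarrow> complex) \<Rightarrow> bool" where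
  "A0 \<xi> a \<longleftrightarrow> (\<forall>I<16. \<forall>J<16. a I J = - a J I) \<and> (\<exists>c. \<forall>I<16. (\<Sum>J<16. a I J * \<xi> J) = c * \<xi> I)"
definition A1 :: "(nat \<Rightarrow> complex) \<Rightarrow> (nat \<Rightarrow> nat \<Rightarrow> complex) \<Rightarrow> bool" where
  "A1 \<xi> a \<longleftrightarrow> (\<exists>w. (\<Sum>J<16. \<xi> J * w J) = 0 \<and> (\<forall>I<16. \<forall>J<16. a I J = \<xi> I * w J - \<xi> J * w I))"

lemma gV_eq: "B < 128 \<Longrightarrow> gV G P a B = (\<Sum>I<16. \<Sum>J<16. (a I J / 8) * (gR G J (gL G I P) B - gR G I (gL G J P) B))"
  unfolding gV_def Gexp by simp
lemma fA_eq: "I < 16 \<Longrightarrow> J < 16 \<Longrightarrow> fA G P v I J = (ip (gL G I P) (gL G J v) - ip (gL G J P) (gL G I v)) / 2"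
  by (simp add: fA_def Fexp)

lemma dsum: "(\<Sum>I<16. \<Sum>J<16. x I * y J * gR G J (gL G I P) B) = gRx G y (gLx G x P) B"
proof -
  have "gRx G y (gLx G x P) B = (\<Sum>J<16. \<Sum>I<16. x I * y J * gR G J (gL G I P) B)"
    by (simp add: gRx_def gR_gLx sum_distrib_left mult_ac)
  also have "\<dots> = (\<Sum>I<16. \<Sum>J<16. x I * y J * gR G J (gL G I P) B)" by (rule sum.swap)
  finally show ?thesis by simp
qed

context
  fixes G :: "nat \<Rightarrow> nat \<Rightarrow> nat \<Rightarrow> real" and P :: "nat \<Rightarrow> complex" and \<xi> :: "nat \<Rightarrow> complex"
  assumes gb: "gamma_blocks G" and hP: "\<And>Ad. Ad < 128 \<Longrightarrow> gLx G \<xi> P Ad = 0"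
begin

lemma RxLP: "A < 128 \<Longrightarrow> I < 16 \<Longrightarrow> gRx G \<xi> (gL G I P) A = 2 * \<xi> I * P A"
proof -
  assume A: "A < 128" and I: "I < 16"
  have "gR G I (gLx G \<xi> P) A = gR G I (\<lambda>_. 0) A" by (rule gR_cong) (simp add: hP)
  then have "gR G I (gLx G \<xi> P) A = 0" by (simp add: gR_zero)
  with C1m[OF gb A I, of \<xi> P] show ?thesis by simp
qed

lemma F1: "A0 \<xi> (fA G P v)"
  unfolding A0_def
proof (intro conjI allI impI)
  fix I J :: nat assume "I < 16" "J < 16"
  then show "fA G P v I J = - fA G P v J I" by (simp add: fA_eq field_simps)
next
  show "\<exists>c. \<forall>I<16. (\<Sum>J<16. fA G P v I J * \<xi> J) = c * \<xi> I"
  proof (intro exI allI impI)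
    fix I :: nat assume I: "I < 16"
    have z: "ip (gLx G \<xi> P) (gL G I v) = 0"
      using ip_cong[of "gLx G \<xi> P" "\<lambda>_. 0" "gL G I v" "gL G I v"] hP by (simp add: ip_zero1)
    have "(\<Sum>J<16. fA G P v I J * \<xi> J) = (\<Sum>J<16. \<xi> J * ip (gL G I P) (gL G J v) - \<xi> J * ip (gL G J P) (gL G I v)) / 2"
      using I by (simp add: fA_eq sum_divide_distrib algebra_simps)
    also have "\<dots> = (ip (gL G I P) (gLx G \<xi> v) - ip (gLx G \<xi> P) (gL G I v)) / 2"
      by (simp add: sum_subtractf gLx_fun ip_sum1 ip_sum2 ip_scale1 ip_scale2)
    also have "\<dots> = ip (gRx G \<xi> (gL G I P)) v / 2"
      by (simp add: z adjLx)
    also have "\<dots> = ip (\<lambda>A. (2 * \<xi> I) * P A) v / 2"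
      by (rule arg_cong[where f="\<lambda>z. z / 2"], rule ip_cong) (simp_all add: RxLP I)
    also have "\<dots> = ip P v * \<xi> I" by (simp add: ip_scale1)
    finally show "(\<Sum>J<16. fA G P v I J * \<xi> J) = ip P v * \<xi> I" .
  qed
qed

lemma F4: assumes "A1 \<xi> a" shows "gV G P a B = 0"
proof (cases "B < 128")
  case False then show ?thesis by (simp add: gV_def)
next
  case B: True
  from assms obtain w where w0: "(\<Sum>J<16. \<xi> J * w J) = 0"
    and aw: "\<And>I J. I < 16 \<Longrightarrow> J < 16 \<Longrightarrow> a I J = \<xi> I * w J - \<xi> J * w I"
    unfolding A1_def by blast
  define X where "X I J = gR G J (gL G I P) B" for I J
  have z1: "gRx G w (gLx G \<xi> P) B = 0"
    using gRx_cong[of "gLx G \<xi> P" "\<lambda>_. 0" G w B] hP by (simp add: gRx_zero)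
  have z2: "gRx G \<xi> (gLx G w P) B = 0"
    using C1xx[OF gb B, of \<xi> w P] z1 w0 by (simp add: dot_def)
  have T1: "(\<Sum>I<16. \<Sum>J<16. \<xi> I * w J * X I J) = 0"
    using z1 by (simp add: X_def dsum)
  have T4: "(\<Sum>I<16. \<Sum>J<16. \<xi> J * w I * X J I) = 0"
  proof -
    have "(\<Sum>I<16. \<Sum>J<16. \<xi> J * w I * X J I) = (\<Sum>J<16. \<Sum>I<16. \<xi> J * w I * X J I)" by (rule sum.swap)
    then show ?thesis using T1 by simp
  qed
  have T2: "(\<Sum>I<16. \<Sum>J<16. \<xi> J * w I * X I J) = 0"
    using z2 by (simp add: X_def dsum[symmetric] mult_ac)
  have T3: "(\<Sum>I<16. \<Sum>J<16. \<xi> I * w J * X J I) = 0"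
  proof -
    have "(\<Sum>I<16. \<Sum>J<16. \<xi> I * w J * X J I) = (\<Sum>J<16. \<Sum>I<16. \<xi> I * w J * X J I)" by (rule sum.swap)
    then show ?thesis using T2 by simp
  qed
  have "gV G P a B = (\<Sum>I<16. \<Sum>J<16. ((\<xi> I * w J * X I J - \<xi> I * w J * X J I) - (\<xi> J * w I * X I J - \<xi> J * w I * X J I)) / 8)"
    using B by (simp add: gV_eq aw X_def algebra_simps)
  also have "\<dots> = ((\<Sum>I<16. \<Sum>J<16. \<xi> I * w J * X I J) - (\<Sum>I<16. \<Sum>J<16. \<xi> I * w J * X J I)
     - ((\<Sum>I<16. \<Sum>J<16. \<xi> J * w I * X I J) - (\<Sum>I<16. \<Sum>J<16. \<xi> J * w I * X J I))) / 8"
    by (simp only: sum_divide_distrib[symmetric] sum_subtractf)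
  also have "\<dots> = 0" by (simp add: T1 T2 T3 T4)
  finally show ?thesis .
qed


lemma Kid: "I < 16 \<Longrightarrow> J < 16 \<Longrightarrow> Ad < 128 \<Longrightarrow>
   gLx G \<xi> (gR G J (gL G I P)) Ad = 2 * \<xi> J * gL G I P Ad - 2 * \<xi> I * gL G J P Ad"
proof -
  assume I: "I < 16" and J: "J < 16" and Ad: "Ad < 128"
  have "gL G J (gRx G \<xi> (gL G I P)) Ad = gL G J (\<lambda>A. (2 * \<xi> I) * P A) Ad"
    by (rule gL_cong) (simp add: RxLP I)
  also have "\<dots> = 2 * \<xi> I * gL G J P Ad" by (rule gL_scale)
  finally show ?thesis using C2m[OF gb Ad J, of \<xi> "gL G I P"] by (simp add: algebra_simps)
qed

lemma F2: assumes a: "A0 \<xi> a" and Ad: "Ad < 128" shows "gLx G \<xi> (gV G P a) Ad = 0"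
proof -
  from a obtain c where anti: "\<And>I J. I < 16 \<Longrightarrow> J < 16 \<Longrightarrow> a I J = - a J I"
    and ac: "\<And>I. I < 16 \<Longrightarrow> (\<Sum>J<16. a I J * \<xi> J) = c * \<xi> I"
    unfolding A0_def by blast
  have e1: "(\<Sum>I<16. \<Sum>J<16. a I J * \<xi> J * gL G I P Ad) = 0"
  proof -
    have "(\<Sum>I<16. \<Sum>J<16. a I J * \<xi> J * gL G I P Ad) = (\<Sum>I<16. (\<Sum>J<16. a I J * \<xi> J) * gL G I P Ad)"
      by (simp add: sum_distrib_right)
    also have "\<dots> = (\<Sum>I<16. c * (\<xi> I * gL G I P Ad))" by (rule sum.cong) (simp_all add: ac)
    also have "\<dots> = c * gLx G \<xi> P Ad" by (simp add: gLx_def sum_distrib_left)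
    finally show ?thesis by (simp add: hP Ad)
  qed
  have e2: "(\<Sum>I<16. \<Sum>J<16. a I J * \<xi> I * gL G J P Ad) = 0"
  proof -
    have "(\<Sum>I<16. \<Sum>J<16. a I J * \<xi> I * gL G J P Ad) = (\<Sum>J<16. \<Sum>I<16. a I J * \<xi> I * gL G J P Ad)"
      by (rule sum.swap)
    also have "\<dots> = (\<Sum>J<16. (\<Sum>I<16. a I J * \<xi> I) * gL G J P Ad)"
      by (simp add: sum_distrib_right)
    also have "\<dots> = (\<Sum>J<16. - c * (\<xi> J * gL G J P Ad))"
    proof (rule sum.cong[OF refl])
      fix J assume J: "J \<in> {..<16::nat}"
      have "(\<Sum>I<16. a I J * \<xi> I) = (\<Sum>I<16. - (a J I * \<xi> I))"
        using J by (intro sum.cong refl) (simp add: anti[of _ J])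
      also have "\<dots> = - (c * \<xi> J)" using J ac by (simp add: sum_negf)
      finally show "(\<Sum>I<16. a I J * \<xi> I) * gL G J P Ad = - c * (\<xi> J * gL G J P Ad)" by simp
    qed
    also have "\<dots> = - c * gLx G \<xi> P Ad" by (simp add: gLx_def sum_distrib_left)
    finally show ?thesis by (simp add: hP Ad)
  qed
  have "gLx G \<xi> (gV G P a) Ad = gLx G \<xi> (\<lambda>B. \<Sum>I<16. \<Sum>J<16. (a I J / 8) * (gR G J (gL G I P) B - gR G I (gL G J P) B)) Ad"
    by (rule gLx_cong) (simp add: gV_eq)
  also have "\<dots> = (\<Sum>I<16. \<Sum>J<16. (a I J / 8) * (gLx G \<xi> (gR G J (gL G I P)) Ad - gLx G \<xi> (gR G I (gL G J P)) Ad))"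
    by (simp only: gLx_sum gLx_scale gLx_diff)
  also have "\<dots> = (\<Sum>I<16. \<Sum>J<16. a I J * \<xi> J * gL G I P Ad / 2 - a I J * \<xi> I * gL G J P Ad / 2)"
    by (intro sum.cong refl) (simp add: Kid Ad algebra_simps)
  also have "\<dots> = (\<Sum>I<16. \<Sum>J<16. a I J * \<xi> J * gL G I P Ad) / 2 - (\<Sum>I<16. \<Sum>J<16. a I J * \<xi> I * gL G J P Ad) / 2"
    by (simp only: sum_subtractf sum_divide_distrib[symmetric])
  also have "\<dots> = 0" by (simp add: e1 e2)
  finally show ?thesis .
qed

lemma Erep: assumes X: "\<And>Ad. Ad < 128 \<Longrightarrow> gLx G \<xi> X Ad = 0" and dxe: "dot \<xi> \<eta> = 1" and A: "A < 128"
  shows "X A = gRx G \<xi> (gLx G \<eta> X) A / 2"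
proof -
  have "gRx G \<eta> (gLx G \<xi> X) A = gRx G \<eta> (\<lambda>_. 0) A" by (rule gRx_cong) (simp add: X)
  then have "gRx G \<eta> (gLx G \<xi> X) A = 0" by (simp add: gRx_zero)
  with C1xx[OF gb A, of \<xi> \<eta> X] dxe show ?thesis by simp
qed

lemma Lrep: assumes X: "\<And>Ad. Ad < 128 \<Longrightarrow> gLx G \<xi> X Ad = 0" and dxe: "dot \<xi> \<eta> = 1"
  and I: "I < 16" and Ad: "Ad < 128"
  shows "gL G I X Ad = \<xi> I * gLx G \<eta> X Ad - (1/2) * gLx G \<xi> (gR G I (gLx G \<eta> X)) Ad"
proof -
  have "gL G I X Ad = gL G I (\<lambda>A. (1/2) * gRx G \<xi> (gLx G \<eta> X) A) Ad"
    by (rule gL_cong) (simp add: Erep[OF X dxe])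
  also have "\<dots> = (1/2) * gL G I (gRx G \<xi> (gLx G \<eta> X)) Ad" by (rule gL_scale)
  finally have f: "gL G I X Ad = (1/2) * gL G I (gRx G \<xi> (gLx G \<eta> X)) Ad" .
  have c: "gL G I (gRx G \<xi> (gLx G \<eta> X)) Ad = 2 * \<xi> I * gLx G \<eta> X Ad - gLx G \<xi> (gR G I (gLx G \<eta> X)) Ad"
    using C2m[OF gb Ad I, of \<xi> "gLx G \<eta> X"] by (simp add: algebra_simps eq_diff_eq)
  show ?thesis unfolding f c by (simp add: algebra_simps)
qed

lemma zz: assumes dxx: "dot \<xi> \<xi> = 0" shows "ip (gLx G \<xi> U) (gLx G \<xi> V) = 0"
proof -
  have "ip (gLx G \<xi> U) (gLx G \<xi> V) = ip (gRx G \<xi> (gLx G \<xi> U)) V"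
    by (rule adjLx)
  also have "\<dots> = ip (\<lambda>_. 0) V"
    by (rule ip_cong) (use C1xx[OF gb, of _ \<xi> \<xi> U] dxx in simp_all)
  finally show ?thesis by (simp add: ip_zero1)
qed

lemma Qgen: assumes X: "\<And>Ad. Ad < 128 \<Longrightarrow> gLx G \<xi> X Ad = 0" and Y: "\<And>Ad. Ad < 128 \<Longrightarrow> gLx G \<xi> Y Ad = 0"
  and dxe: "dot \<xi> \<eta> = 1" and dxx: "dot \<xi> \<xi> = 0" and I: "I < 16" and J: "J < 16"
  shows "ip (gL G I X) (gL G J Y) = \<xi> I * \<xi> J * ip (gLx G \<eta> X) (gLx G \<eta> Y)
     - \<xi> I / 2 * ip (gRx G \<xi> (gLx G \<eta> X)) (gR G J (gLx G \<eta> Y))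
     - \<xi> J / 2 * ip (gRx G \<xi> (gLx G \<eta> Y)) (gR G I (gLx G \<eta> X))"
proof -
  define p where "p = gLx G \<eta> X"
  define s where "s = gLx G \<eta> Y"
  have "ip (gL G I X) (gL G J Y) = ip (\<lambda>Ad. \<xi> I * p Ad - (1/2) * gLx G \<xi> (gR G I p) Ad)
                                       (\<lambda>Ad. \<xi> J * s Ad - (1/2) * gLx G \<xi> (gR G J s) Ad)"
    by (rule ip_cong) (simp_all add: p_def s_def Lrep[OF X dxe I] Lrep[OF Y dxe J])
  also have "\<dots> = \<xi> I * (\<xi> J * ip p s) - \<xi> I * ((1/2) * ip p (gLx G \<xi> (gR G J s)))
        - ((1/2) * (\<xi> J * ip (gLx G \<xi> (gR G I p)) s) - (1/2) * ((1/2) * ip (gLx G \<xi> (gR G I p)) (gLx G \<xi> (gR G J s))))"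
    by (simp only: ip_diff1 ip_diff2 ip_scale1 ip_scale2)
  also have "\<dots> = \<xi> I * \<xi> J * ip p s - \<xi> I / 2 * ip (gRx G \<xi> p) (gR G J s) - \<xi> J / 2 * ip (gRx G \<xi> s) (gR G I p)"
    by (simp only: zz[OF dxx] mult_zero_right diff_zero) (simp add: adjLx ip_comm[of "gLx G \<xi> (gR G I p)" s] algebra_simps)
  finally show ?thesis by (simp add: p_def s_def)
qed

lemma F3: assumes V: "\<And>Ad. Ad < 128 \<Longrightarrow> gLx G \<xi> v Ad = 0"
  and dxe: "dot \<xi> \<eta> = 1" and dxx: "dot \<xi> \<xi> = 0"
  shows "A1 \<xi> (fA G P v)"
  unfolding A1_def
proof (intro exI conjI allI impI)
  define p where "p = gLx G \<eta> P"
  define s where "s = gLx G \<eta> v"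
  define w where "w J = (ip (gRx G \<xi> s) (gR G J p) - ip (gRx G \<xi> p) (gR G J s)) / 4" for J
  have sx: "\<And>u q. (\<Sum>J<16. \<xi> J * ip u (gR G J q)) = ip u (gRx G \<xi> q)"
    by (simp add: gRx_fun ip_sum2 ip_scale2)
  show "(\<Sum>J<16. \<xi> J * w J) = 0"
  proof -
    have "(\<Sum>J<16. \<xi> J * w J) = ((\<Sum>J<16. \<xi> J * ip (gRx G \<xi> s) (gR G J p)) - (\<Sum>J<16. \<xi> J * ip (gRx G \<xi> p) (gR G J s))) / 4"
      unfolding w_def sum_subtractf[symmetric] sum_divide_distrib by (intro sum.cong refl) (simp add: algebra_simps)
    also have "\<dots> = (ip (gRx G \<xi> s) (gRx G \<xi> p) - ip (gRx G \<xi> p) (gRx G \<xi> s)) / 4" by (simp only: sx)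
    also have "\<dots> = 0" by (simp add: ip_comm[of "gRx G \<xi> s"])
    finally show ?thesis .
  qed
  fix I J :: nat assume I: "I < 16" and J: "J < 16"
  show "fA G P v I J = \<xi> I * w J - \<xi> J * w I"
  proof -
    note q1 = Qgen[OF hP V dxe dxx I J]
    note q2 = Qgen[OF hP V dxe dxx J I]
    show ?thesis
      apply (simp only: fA_eq[OF I J])
      apply (simp only: q1 q2)
      apply (simp only: w_def p_def s_def)
      apply (simp add: field_simps)
      done
  qed
qed

end


lemma ad_p_eq': "ad_p G P x = (fA G P (snd x), gV G P (fst x))"
  by (cases x) (simp add: ad_p_eq)

theorem mainTheorem4:
  fixes G :: "nat \<Rightarrow> nat \<Rightarrow> nat \<Rightarrow> real"
    and P :: "nat \<Rightarrow> complex"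
    and \<xi> :: "nat \<Rightarrow> complex"
  assumes "gamma_blocks G"
    and "\<exists>I<16. \<xi> I \<noteq> 0"
    and "\<forall>Ad<128. (\<Sum>I<16. \<Sum>A<128. complex_of_real (G I A Ad) * P A * \<xi> I) = 0"
  shows "nilpotent_p G P"
proof -
  note gb = assms(1)
  have hP: "\<And>Ad. Ad < 128 \<Longrightarrow> gLx G \<xi> P Ad = 0"
  proof -
    fix Ad :: nat assume "Ad < 128"
    then have "(\<Sum>I<16. \<Sum>A<128. complex_of_real (G I A Ad) * P A * \<xi> I) = 0" using assms(3) by blast
    then show "gLx G \<xi> P Ad = 0" by (simp add: gLx_def gL_def sum_distrib_left mult_ac)
  qed
  let ?ad = "ad_p G P"
  show ?thesis
  proof (cases "\<forall>A<128. P A = 0")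
    case True
    have "\<And>x :: e8elt. ?ad x = e8_zero"
    proof -
      fix x :: e8elt
      have "fA G P (snd x) = (\<lambda>_ _. 0)" by (intro ext) (simp add: fA_def True)
      moreover have "gV G P (fst x) = (\<lambda>_. 0)" by (intro ext) (simp add: gV_def True)
      ultimately show "?ad x = e8_zero" by (simp add: ad_p_eq' e8_zero_def)
    qed
    then show ?thesis unfolding nilpotent_p_def by (intro exI[of _ 1]) simp
  next
    case False
    then obtain Az where Az: "Az < 128" "P Az \<noteq> 0" by blast
    have z: "gRx G \<xi> (gLx G \<xi> P) Az = 0"
      using gRx_cong[of "gLx G \<xi> P" "\<lambda>_. 0" G \<xi> Az] hP by (simp add: gRx_zero)
    have dxx: "dot \<xi> \<xi> = 0" using C1xx[OF gb Az(1), of \<xi> \<xi> P] z Az(2) by simp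
    define S where "S = (\<Sum>I<16. \<xi> I * cnj (\<xi> I))"
    obtain I0 where I0: "I0 < 16" "\<xi> I0 \<noteq> 0" using assms(2) by blast
    have Sr: "S = complex_of_real (\<Sum>I<16. (norm (\<xi> I))^2)"
      unfolding S_def of_real_sum by (intro sum.cong refl) (rule complex_norm_square[symmetric])
    have "0 < (\<Sum>I<16. (norm (\<xi> I))^2)"
      by (rule sum_pos2[of _ I0]) (use I0 in auto)
    then have S0: "S \<noteq> 0" unfolding Sr by (metis less_irrefl of_real_eq_0_iff)
    define \<eta> where "\<eta> I = cnj (\<xi> I) / S" for I
    have dxe: "dot \<xi> \<eta> = 1"
      unfolding dot_def \<eta>_def using S0 by (simp add: sum_divide_distrib[symmetric] S_def[symmetric] times_divide_eq_right)
    define Sv where "Sv v \<longleftrightarrow> (\<forall>Ad<128. gLx G \<xi> v Ad = 0)" for v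
    have s1: "\<And>x. A0 \<xi> (fst (?ad x))" by (simp add: ad_p_eq' F1[OF gb hP])
    have s2: "\<And>x. A0 \<xi> (fst x) \<Longrightarrow> Sv (snd (?ad x))"
      by (simp add: ad_p_eq' Sv_def F2[OF gb hP])
    have s3: "\<And>x. Sv (snd x) \<Longrightarrow> A1 \<xi> (fst (?ad x))"
      by (simp add: ad_p_eq' Sv_def F3[OF gb hP _ dxe dxx])
    have s4: "\<And>x. A1 \<xi> (fst x) \<Longrightarrow> snd (?ad x) = (\<lambda>_. 0)"
      by (simp add: ad_p_eq' F4[OF gb hP] fun_eq_iff)
    have s5: "\<And>x. snd x = (\<lambda>_. 0) \<Longrightarrow> fst (?ad x) = (\<lambda>_ _. 0)"
      by (simp add: ad_p_eq' fA_def fun_eq_iff)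
    have "\<forall>x \<in> e8_carrier. (?ad ^^ 5) x = e8_zero"
    proof
      fix x :: e8elt
      define x1 where "x1 = ?ad x"
      define x2 where "x2 = ?ad x1"
      define x3 where "x3 = ?ad x2"
      define x4 where "x4 = ?ad x3"
      define x5 where "x5 = ?ad x4"
      have "A0 \<xi> (fst x1)" unfolding x1_def by (rule s1)
      have "A0 \<xi> (fst x2)" unfolding x2_def by (rule s1)
      have "Sv (snd x2)" unfolding x2_def by (rule s2) fact
      have "A0 \<xi> (fst x3)" unfolding x3_def by (rule s1)
      have "Sv (snd x3)" unfolding x3_def by (rule s2) fact
      have "A1 \<xi> (fst x3)" unfolding x3_def by (rule s3) fact
      have "A1 \<xi> (fst x4)" unfolding x4_def by (rule s3) fact
      have "snd x4 = (\<lambda>_. 0)" unfolding x4_def by (rule s4) fact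
      have "snd x5 = (\<lambda>_. 0)" unfolding x5_def by (rule s4) fact
      have "fst x5 = (\<lambda>_ _. 0)" unfolding x5_def by (rule s5) fact
      then have "x5 = e8_zero" using \<open>snd x5 = (\<lambda>_. 0)\<close> by (simp add: e8_zero_def prod_eq_iff)
      moreover have "(?ad ^^ 5) x = x5"
        by (simp add: x1_def x2_def x3_def x4_def x5_def eval_nat_numeral)
      ultimately show "(?ad ^^ 5) x = e8_zero" by simp
    qed
    then show ?thesis unfolding nilpotent_p_def by blast
  qed
qed

end
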